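(* Let $s,d$ be integers with $1\le s$ and $d\ge 2s$. There is a constant $C$ depending only on $d$ such that the following holds for all $n\ge 2(d+1)$ and all real $K\ge 0$: if $\mathcal F\subseteq\binom{[n]}{d+1}$ is an $s$-witness family with $|\mathcal F|\ge\binom{n-1}{d}-Kn^{d-1}$, then there exists $x_0\in[n]$ such that the star $\mathcal F^*=\{F^*\in\binom{[n]}{d+1}: x_0\in F^*\}$ satisfies $|\mathcal F\triangle\mathcal F^*|\le C(K+1)n^{d-1}$.
   Context: $[n]=\{1,\dots,n\}$ and $\binom{[n]}{d+1}$ denotes the family of all $(d+1)$-element subsets of $[n]$; $\triangle$ denotes symmetric difference. For $n\ge d+1$ and $0\le s\le d$, a family $\mathcal F\subseteq\binom{[n]}{d+1}$ is an $s$-witness family if for every $F\in\mathcal F$ there exists $B_F\subseteq F$ with $|B_F|=s$ such that $F\cap F'\neq B_F$ for every $F'\in\mathcal F$. *)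

theory Defs
  imports Complex_Main
begin

definition s_witness_family :: "nat \<Rightarrow> nat set set \<Rightarrow> bool" where
  "s_witness_family s \<F> \<longleftrightarrow>
     (\<forall>F\<in>\<F>. \<exists>B. B \<subseteq> F \<and> card B = s \<and> (\<forall>F'\<in>\<F>. F \<inter> F' \<noteq> B))"

end

theory Submission
  imports Defs
begin


lemma card_supsets_le:
  assumes A: "finite A" and S: "finite S"
  shows "card {G. G \<subseteq> A \<and> card G = k \<and> S \<subseteq> G} \<le> card A ^ (k - card S)"
proof (cases "card S \<le> k")
  case False
  have "{G. G \<subseteq> A \<and> card G = k \<and> S \<subseteq> G} = {}"
  proof (rule ccontr)
    assume "{G. G \<subseteq> A \<and> card G = k \<and> S \<subseteq> G} \<noteq> {}"
    then obtain G where "G \<subseteq> A" "card G = k" "S \<subseteq> G" by blast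
    then have "card S \<le> k" using card_mono[of G S] finite_subset[OF _ A] by blast
    with False show False by simp
  qed
  then show ?thesis by (metis card.empty le0)
next
  case True
  let ?X = "{G. G \<subseteq> A \<and> card G = k \<and> S \<subseteq> G}"
  have inj: "inj_on (\<lambda>G. G - S) ?X"
    by (rule inj_onI) (simp, metis Diff_partition)
  have sub: "(\<lambda>G. G - S) ` ?X \<subseteq> {X. X \<subseteq> A \<and> card X = k - card S}"
  proof
    fix Y assume "Y \<in> (\<lambda>G. G - S) ` ?X"
    then obtain G where G: "G \<subseteq> A" "card G = k" "S \<subseteq> G" and Y: "Y = G - S" by blast
    have "finite G" using G A finite_subset by blast
    then have "card (G - S) = k - card S" using G card_Diff_subset[of S G] S by simp
    then show "Y \<in> {X. X \<subseteq> A \<and> card X = k - card S}" using G Y by auto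
  qed
  have "card ?X = card ((\<lambda>G. G - S) ` ?X)" using card_image[OF inj] by simp
  also have "\<dots> \<le> card {X. X \<subseteq> A \<and> card X = k - card S}"
    by (rule card_mono[OF _ sub]) (rule finite_subset[of _ "Pow A"], use A in auto)
  also have "\<dots> = card A choose (k - card S)" using n_subsets[OF A] by simp
  also have "\<dots> \<le> card A ^ (k - card S)"
  proof (cases "k - card S \<le> card A")
    case True then show ?thesis by (rule binomial_le_pow)
  next
    case False then show ?thesis by (simp add: binomial_eq_0)
  qed
  finally show ?thesis .
qed

lemma card_supsets_ge:
  assumes A: "finite A" and BA: "B \<subseteq> A" and j: "card B \<le> j"
  shows "(card A - card B) choose (j - card B) \<le> card {W. B \<subseteq> W \<and> W \<subseteq> A \<and> card W = j}"
proof -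
  have fB: "finite B" using A BA finite_subset by blast
  let ?Y = "{X. X \<subseteq> A - B \<and> card X = j - card B}"
  have inj: "inj_on (\<lambda>X. X \<union> B) ?Y"
    by (rule inj_onI) blast
  have sub: "(\<lambda>X. X \<union> B) ` ?Y \<subseteq> {W. B \<subseteq> W \<and> W \<subseteq> A \<and> card W = j}"
  proof
    fix W assume "W \<in> (\<lambda>X. X \<union> B) ` ?Y"
    then obtain X where X: "X \<subseteq> A - B" "card X = j - card B" and W: "W = X \<union> B" by blast
    have "finite X" using X A finite_subset by blast
    then have "card (X \<union> B) = card X + card B" using card_Un_disjoint[of X B] fB X by auto
    then show "W \<in> {W. B \<subseteq> W \<and> W \<subseteq> A \<and> card W = j}" using X W j BA by auto
  qed
  have "(card A - card B) choose (j - card B) = card ?Y"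
    using n_subsets[of "A - B" "j - card B"] A card_Diff_subset[OF fB BA] by simp
  also have "\<dots> = card ((\<lambda>X. X \<union> B) ` ?Y)" using card_image[OF inj] by simp
  also have "\<dots> \<le> card {W. B \<subseteq> W \<and> W \<subseteq> A \<and> card W = j}"
    by (rule card_mono[OF _ sub]) (rule finite_subset[of _ "Pow A"], use A in auto)
  finally show ?thesis .
qed




lemma arith_final:
  fixes N K Fc Ca Dz Do Dt Bad Sg So P NP Cb Xo Dl pp pd pa ps psm pb A tt Mv Sv dv Fv :: real
  assumes N: "N \<ge> 2*(dv+1)" "dv \<ge> 1" and K: "K \<ge> 0" and p: "pp > 0" "pd = N*pp" "pa*ps = pd" "psm*pa = pp" "pb*ps = pa"
      "pa > 0" "ps > 0" "pb \<ge> 0" "psm \<ge> 0"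
    and nn: "Fc \<ge> 0" "Ca \<ge> 0" "Dz \<ge> 0" "Do \<ge> 0" "Dt \<ge> 0" "Bad \<ge> 0" "Sg \<ge> 0" "So \<ge> 0" "P \<ge> 0" "NP \<ge> 0" "Cb \<ge> 0" "Xo \<ge> 0"
    and ha: "Dz \<le> Mv*pp" "Mv \<ge> 0"
    and hb: "(N-dv-1)*Bad \<le> 2*N*(Ca - Fc) + 2*(N-dv-1)*Dz"
    and hc: "Ca - Fc \<le> K*pp"
    and hd: "Fc = Dz+Do+Dt" "2*Dt \<le> Bad"
    and he: "Xo \<le> Dz + Dt + So*pa"
    and hf: "Dl \<le> 2*Xo + (Ca - Fc)" "Xo \<le> Fc"
    and hg: "Do \<le> Sg*pa"
    and hh: "Sg*So \<le> P + NP" "NP \<le> Sg*(Sv*psm)" "P*Cb \<le> Fv*Bad"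
    and hi: "Ca \<le> pd" "A*Ca \<ge> pd" "tt*Cb \<ge> pb" "1 \<le> tt" "tt \<le> A" "Sv \<le> dv" "Fv \<ge> 1" "Sv \<ge> 0"
  shows "Dl \<le> (2*(2*A*(1 + Mv + (4+2*Mv))) + 3*Mv + 2*(4+2*Mv) + 2*(2*A*A*Fv)*(4+2*Mv) + 2*dv + 1) * (K+1) * pp"
proof -
  define E where "E = (K+1)*pp"
  define cb where "cb = 4 + 2*Mv"
  define cd where "cd = 1 + Mv + cb"
  define L where "L = 2*A*cd"
  define c5 where "c5 = 2*A*A*Fv"
  have Aone: "A \<ge> 1" using hi by linarith
  have Eone: "pp \<le> E" "K*pp \<le> E" "E \<ge> 0" using K p unfolding E_def by (simp_all add: algebra_simps)
  have Npos: "N - dv - 1 > 0" "N > 0" using N by simp_all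
  have bz: "2*N*(Ca-Fc) \<le> 2*N*(K*pp)" using hc Npos by simp
  have bzz: "2*N*(K*pp) \<le> 4*(N-dv-1)*(K*pp)"
  proof -
    have "2*N \<le> 4*(N-dv-1)" using N by (simp add: algebra_simps)
    then show ?thesis using K p(1) by (intro mult_right_mono) auto
  qed
  have "(N-dv-1)*Bad \<le> (N-dv-1)*(4*(K*pp) + 2*Dz)" using hb bz bzz by (simp add: algebra_simps)
  then have bo: "Bad \<le> 4*(K*pp) + 2*Dz" using Npos by simp
  have MvE: "Mv*pp \<le> Mv*E" using Eone ha by (intro mult_left_mono) auto
  have bt: "Bad \<le> cb*E" unfolding cb_def using bo Eone ha MvE by (simp add: algebra_simps)
  have D0E: "Dz \<le> Mv*E" using ha MvE by linarith
  have cbpos: "cb \<ge> 0" "cd \<ge> 0" "c5 \<ge> 0" "L \<ge> 0" using ha Aone hi unfolding cb_def cd_def c5_def L_def by auto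
  have "(N-dv-1)*Dz \<le> N*Dz" using nn N by (intro mult_right_mono) auto
  moreover have z: "0 \<le> (N-dv-1)*Bad" using Npos nn by simp
  ultimately have "0 \<le> 2*N*(Ca-Fc) + 2*(N*Dz)" using hb by linarith
  then have "0 \<le> 2*N*(Ca - Fc + Dz)" by (simp add: algebra_simps)
  then have tr: "Fc \<le> Ca + Dz" using Npos by (simp add: zero_le_mult_iff)
  have triv: "Dl \<le> 2*pd + Mv*E" using hf tr hi D0E by linarith
  define Cst where "Cst = 2*L + 3*Mv + 2*cb + 2*c5*cb + 2*dv + 1"
  have goal: "Dl \<le> Cst * E"
  proof (cases "N \<le> L*(K+1)")
    case True
    have "pd \<le> L*E" unfolding E_def using True p by (simp add: mult.assoc)
    then have "Dl \<le> (2*L + Mv)*E" using triv by (simp add: algebra_simps)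
    also have "\<dots> \<le> Cst*E" unfolding Cst_def using Eone cbpos ha N by (intro mult_right_mono) auto
    finally show ?thesis .
  next
    case False
    have LE: "L*E < pd" unfolding E_def using False p by (simp add: mult.assoc[symmetric]) 
    have D2E: "Dt \<le> cb*E" using hd bt nn by linarith
    have D1lo: "Do \<ge> Ca - cd*E" unfolding cd_def using hd hc D0E D2E Eone by (simp add: algebra_simps)
    have "A*(2*(cd*E)) = L*E" unfolding L_def by (simp add: algebra_simps)
    then have "A*(2*(cd*E)) < A*Ca" using LE hi by linarith
    then have "2*(cd*E) < Ca" using Aone by simp
    then have "2*Do \<ge> Ca" using D1lo by linarith
    then have "2*A*Do \<ge> A*Ca" using Aone by (simp add: algebra_simps)
    then have "2*A*Do \<ge> pd" using hi by linarith
    moreover have "2*A*Do \<le> 2*A*(Sg*pa)" using hg Aone by simp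
    ultimately have "pa*ps \<le> pa*(2*A*Sg)" using p by (simp add: algebra_simps)
    then have psS: "ps \<le> 2*A*Sg" using mult_le_cancel_left_pos[OF p(6)] by blast
    have Sgpos: "Sg > 0" using psS p(7) nn(7) by (cases "Sg = 0") auto
    have Soa: "So \<le> P/Sg + Sv*psm"
    proof -
      have "Sg*So \<le> Sg*(P/Sg + Sv*psm)" using hh Sgpos by (simp add: algebra_simps)
      then show ?thesis using Sgpos by simp
    qed
    have Sob: "So*pa \<le> (P/Sg)*pa + Sv*pp" using mult_right_mono[OF Soa, of pa] p by (simp add: algebra_simps)
    have paa: "pa \<le> (tt*Cb)*(2*A*Sg)"
    proof -
      have "pb*ps \<le> (tt*Cb)*(2*A*Sg)" by (rule mult_mono) (use hi psS p nn in auto)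
      then show ?thesis using p(5) by simp
    qed
    have "(P/Sg)*pa \<le> (P/Sg)*((tt*Cb)*(2*A*Sg))" using paa nn Sgpos by (intro mult_left_mono) auto
    also have "\<dots> = 2*A*tt*(P*Cb)" using Sgpos by (simp add: field_simps)
    also have "\<dots> \<le> 2*A*tt*(Fv*Bad)" using hh Aone hi by (intro mult_left_mono) auto
    also have "\<dots> \<le> 2*A*A*(Fv*Bad)" using hi Aone nn by (intro mult_right_mono mult_left_mono) auto
    also have "\<dots> = c5*Bad" unfolding c5_def by simp
    also have "\<dots> \<le> c5*(cb*E)" using bt cbpos by (intro mult_left_mono) auto
    finally have tq: "(P/Sg)*pa \<le> c5*(cb*E)" .
    have "Sv*pp \<le> dv*E" by (rule mult_mono) (use hi Eone p N in auto)
    then have "Xo \<le> Mv*E + cb*E + c5*(cb*E) + dv*E" using he D0E D2E Sob tq by linarith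
    then have X2: "2*Xo \<le> 2*(Mv*E + cb*E + c5*(cb*E) + dv*E)" by simp
    have "Dl \<le> 2*Xo + E" using hf hc Eone by linarith
    then have "Dl \<le> 2*(Mv*E + cb*E + c5*(cb*E) + dv*E) + E" using X2 by linarith
    also have "\<dots> = (2*Mv + 2*cb + 2*c5*cb + 2*dv + 1)*E" by (simp add: algebra_simps)
    also have "\<dots> \<le> Cst*E" unfolding Cst_def using Eone cbpos ha by (intro mult_right_mono) auto
    finally show ?thesis .
  qed
  then show ?thesis unfolding Cst_def E_def L_def cd_def cb_def c5_def by (simp add: mult.assoc)
qed



lemma bin_lo:
  fixes n d a j :: nat
  assumes "d \<ge> 1" "a \<ge> j" "n*j \<le> 2*d*a"
  shows "real n^j \<le> (2*real d)^j * real (a choose j)"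
proof (cases "j = 0")
  case True then show ?thesis by simp
next
  case False
  then have jp: "real j > 0" by simp
  have dp: "real d > 0" using assms by simp
  have "real (n*j) \<le> real (2*d*a)" using assms(3) by (simp only: of_nat_le_iff)
  then have "real n * real j \<le> 2 * real d * real a" by simp
  then have r: "real n / (2*real d) \<le> real a / real j" using jp dp by (simp add: field_simps)
  have "(real n / (2*real d))^j \<le> (real a / real j)^j" by (rule power_mono[OF r]) simp
  also have "\<dots> \<le> real (a choose j)" by (rule binomial_ge_n_over_k_pow_k[OF assms(2)])
  finally have "(real n / (2*real d))^j \<le> real (a choose j)" .
  then have "(2*real d)^j * (real n / (2*real d))^j \<le> (2*real d)^j * real (a choose j)"
    by (rule mult_left_mono) simp
  moreover have "(2*real d)^j * (real n / (2*real d))^j = real n^j"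
  proof -
    have "(2*real d)*(real n/(2*real d)) = real n" using dp by simp
    then show ?thesis by (metis power_mult_distrib)
  qed
  ultimately show ?thesis by linarith
qed


lemma nat_ineq1:
  fixes n d s :: nat
  assumes "2*s \<le> d" "2*(d+1) \<le> n"
  shows "n*(d-2*s) \<le> 2*d*(n-2*s-1)"
proof -
  define m where "m = n-2*s-1"
  have nm: "n = m + 2*s + 1" using assms unfolding m_def by simp
  have a: "d*(2*d+2) \<le> d*n" using assms by (intro mult_le_mono2) simp
  have b: "d*(2*s) \<le> d*d" using assms by (intro mult_le_mono2) simp
  have dd: "n*(d-2*s) \<le> n*d" by simp
  have "d*n = d*m + 2*(d*s) + d" unfolding nm by (simp add: algebra_simps)
  moreover have "d*(2*d+2) = 2*(d*d) + 2*d" by (simp add: algebra_simps)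
  moreover have "d*(2*s) = 2*(d*s)" by (simp add: algebra_simps)
  moreover have "n*d = d*n" by simp
  ultimately have "n*d \<le> 2*(d*m)" using a b by linarith
  then have "n*(d-2*s) \<le> 2*(d*m)" using dd by (rule order_trans[rotated])
  then show ?thesis unfolding m_def by (simp add: mult.assoc)
qed

definition Cst :: "nat \<Rightarrow> real" where
  "Cst d = (2*(2*((2*real d)^d)*(1 + (real d)^2 + (4+2*(real d)^2))) + 3*(real d)^2 + 2*(4+2*(real d)^2)
     + 2*(2*((2*real d)^d)*((2*real d)^d)*4^d)*(4+2*(real d)^2) + 2*real d + 1)"

locale wf =
  fixes n d s :: nat and FF :: "nat set set"
  assumes s1: "1 \<le> s" and ds: "2*s \<le> d" and nd: "2*(d+1) \<le> n"
    and sub: "FF \<subseteq> {F. F \<subseteq> {1..n} \<and> card F = d+1}"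
    and wit: "s_witness_family s FF"
begin

definition valid where "valid B u \<longleftrightarrow> (\<forall>F\<in>FF. B \<subseteq> F \<longrightarrow> u \<in> F)"
definition opn where "opn H \<longleftrightarrow> (\<exists>B u. B \<subseteq> H \<and> card B = s \<and> u \<notin> H \<and> valid B u)"
definition osub where "osub F = {H. H \<subseteq> F \<and> card H = d \<and> opn H}"
definition csub where "csub F = {H. H \<subseteq> F \<and> card H = d \<and> \<not> opn H}"
definition "D0 = {F\<in>FF. osub F = {}}"
definition "D1 = {F\<in>FF. card (osub F) = 1}"
definition "D2 = {F\<in>FF. 2 \<le> card (osub F)}"
definition "Op = {H. H \<subseteq> {1..n} \<and> card H = d \<and> opn H}"
definition "Cl = {H. H \<subseteq> {1..n} \<and> card H = d \<and> \<not> opn H}"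
definition "Good = \<Union> (osub ` D1)"
definition "Bad = Op - Good"
definition "Src x = {B. card B = s \<and> x \<notin> B \<and> valid B x \<and> (\<exists>F\<in>D1. B \<subseteq> F)}"

lemma memb: "F \<in> FF \<Longrightarrow> F \<subseteq> {1..n} \<and> card F = d+1 \<and> finite F"
  using sub finite_subset[of F "{1..n}"] by auto

lemma finFF: "finite FF"
  by (rule finite_subset[OF sub]) (rule finite_subset[of _ "Pow {1..n}"], auto)

lemma insert_eq_card:
  assumes "finite F" "H \<subseteq> F" "u \<in> F" "u \<notin> H" "card F = card H + 1"
  shows "F = insert u H"
proof -
  have "insert u H \<subseteq> F" using assms by auto
  moreover have "finite H" using assms finite_subset by blast
  then have "card (insert u H) = card F" using assms by simp
  ultimately show ?thesis using card_subset_eq[OF assms(1), of "insert u H"] by simp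
qed

lemma open_unique:
  assumes "opn H" "card H = d" "H \<subseteq> F1" "H \<subseteq> F2" "F1 \<in> FF" "F2 \<in> FF"
  shows "F1 = F2"
proof -
  obtain B u where B: "B \<subseteq> H" "card B = s" "u \<notin> H" "valid B u" using assms(1) opn_def by blast
  have "B \<subseteq> F1" "B \<subseteq> F2" using B(1) assms(3,4) by auto
  then have "u \<in> F1" "u \<in> F2" using B(4) assms(5,6) unfolding valid_def by auto
  have c: "card F1 = card H + 1" "card F2 = card H + 1" "finite F1" "finite F2"
    using memb[OF assms(5)] memb[OF assms(6)] assms(2) by auto
  have "F1 = insert u H" by (rule insert_eq_card) (use c assms B \<open>u \<in> F1\<close> in auto)
  moreover have "F2 = insert u H" by (rule insert_eq_card) (use c assms B \<open>u \<in> F2\<close> in auto)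
  ultimately show ?thesis by simp
qed

lemma osub_form:
  assumes "F \<in> FF" "H \<in> osub F"
  shows "\<exists>u\<in>F. H = F - {u} \<and> (\<exists>B. B \<subseteq> H \<and> card B = s \<and> valid B u)"
proof -
  have H: "H \<subseteq> F" "card H = d" "opn H" using assms(2) osub_def by auto
  obtain B u where B: "B \<subseteq> H" "card B = s" "u \<notin> H" "valid B u" using H(3) opn_def by blast
  have "B \<subseteq> F" using B(1) H(1) by auto
  then have u: "u \<in> F" using B(4) assms(1) unfolding valid_def by auto
  have "F = insert u H" using insert_eq_card[of F H u] memb[OF assms(1)] H B u by auto
  then have "H = F - {u}" using B(3) by auto
  then show ?thesis using u B by blast
qed

lemma rule_osub:
  assumes "F \<in> FF" "B \<subseteq> F" "card B = s" "u \<notin> B" "valid B u"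
  shows "u \<in> F" "F - {u} \<in> osub F"
proof -
  show u: "u \<in> F" using assms(1,2,5) unfolding valid_def by auto
  have "card (F - {u}) = d" using memb[OF assms(1)] u by simp
  moreover have "opn (F - {u})" unfolding opn_def using assms by blast
  ultimately show "F - {u} \<in> osub F" unfolding osub_def by auto
qed

lemma fin_osub: "F \<in> FF \<Longrightarrow> finite (osub F)"
  unfolding osub_def by (rule finite_subset[of _ "Pow F"]) (auto simp: memb)

lemma D1_unique:
  assumes "F \<in> D1" "B \<subseteq> F" "card B = s" "u \<notin> B" "valid B u"
     "B' \<subseteq> F" "card B' = s" "u' \<notin> B'" "valid B' u'"
  shows "u = u'"
proof -
  have F: "F \<in> FF" "card (osub F) = 1" using assms(1) D1_def by auto
  have a: "F - {u} \<in> osub F" "u \<in> F" using rule_osub[OF F(1) assms(2-5)] by auto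
  have b: "F - {u'} \<in> osub F" "u' \<in> F" using rule_osub[OF F(1) assms(6-9)] by auto
  obtain H where "osub F = {H}" using F(2) card_1_singletonE by blast
  then have "F - {u} = F - {u'}" using a b by auto
  then show ?thesis using a b by blast
qed

lemma D1_src:
  assumes "F \<in> D1"
  shows "\<exists>x\<in>F. \<exists>B\<in>Src x. B \<subseteq> F"
proof -
  have F: "F \<in> FF" "card (osub F) = 1" using assms D1_def by auto
  obtain H where "osub F = {H}" using F(2) card_1_singletonE by blast
  then have "H \<in> osub F" by simp
  then obtain u B where u: "u \<in> F" "H = F - {u}" "B \<subseteq> H" "card B = s" "valid B u"
    using osub_form[OF F(1)] by blast
  have "u \<notin> B" using u by blast
  then have "B \<in> Src u" unfolding Src_def using u assms by blast
  then show ?thesis using u by blast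
qed

lemma Src_disj:
  assumes "x \<noteq> y" shows "Src x \<inter> Src y = {}"
proof (rule ccontr)
  assume "Src x \<inter> Src y \<noteq> {}"
  then obtain B where "B \<in> Src x" "B \<in> Src y" by blast
  then obtain F where "F \<in> D1" "B \<subseteq> F" "card B = s" "x \<notin> B" "valid B x" "y \<notin> B" "valid B y"
    unfolding Src_def by blast
  then have "x = y" using D1_unique by blast
  with assms show False by simp
qed

lemma Src_sub: "B \<in> Src x \<Longrightarrow> B \<subseteq> {1..n} \<and> card B = s"
proof -
  assume "B \<in> Src x"
  then obtain F where "F \<in> D1" "B \<subseteq> F" "card B = s" unfolding Src_def by blast
  then show ?thesis using memb[of F] unfolding D1_def by auto
qed

lemma fin_Src: "finite (Src x)"
  by (rule finite_subset[of _ "Pow {1..n}"]) (use Src_sub in blast, simp)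


definition wt where "wt F = (SOME B. B \<subseteq> F \<and> card B = s \<and> (\<forall>F'\<in>FF. F \<inter> F' \<noteq> B))"

lemma wt: assumes "F \<in> FF" shows "wt F \<subseteq> F" "card (wt F) = s" "\<And>F'. F' \<in> FF \<Longrightarrow> F \<inter> F' \<noteq> wt F"
proof -
  have "\<exists>B. B \<subseteq> F \<and> card B = s \<and> (\<forall>F'\<in>FF. F \<inter> F' \<noteq> B)"
    using wit assms unfolding s_witness_family_def by blast
  then have "wt F \<subseteq> F \<and> card (wt F) = s \<and> (\<forall>F'\<in>FF. F \<inter> F' \<noteq> wt F)"
    unfolding wt_def by (rule someI_ex)
  then show "wt F \<subseteq> F" "card (wt F) = s" "\<And>F'. F' \<in> FF \<Longrightarrow> F \<inter> F' \<noteq> wt F" by auto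
qed

lemma D0_class:
  assumes F: "F \<in> D0"
  shows "card {G\<in>FF. wt G = wt F} \<le> (d+1-s)*((d+1-s)*n^(d-s-1))"
proof -
  define B where "B = wt F"
  have FF: "F \<in> FF" "osub F = {}" using F D0_def by auto
  have B: "B \<subseteq> F" "card B = s" "\<And>F'. F' \<in> FF \<Longrightarrow> F \<inter> F' \<noteq> B" using wt[OF FF(1)] B_def by auto
  have fF: "finite F" "card F = d+1" "F \<subseteq> {1..n}" using memb[OF FF(1)] by auto
  have fB: "finite B" using B fF finite_subset by blast
  have nv: "\<forall>u\<in>F-B. \<exists>F'. F' \<in> FF \<and> B \<subseteq> F' \<and> u \<notin> F'"
  proof
    fix u assume u: "u \<in> F - B"
    show "\<exists>F'. F' \<in> FF \<and> B \<subseteq> F' \<and> u \<notin> F'"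
    proof (rule ccontr)
      assume "\<not> ?thesis"
      then have "valid B u" unfolding valid_def by blast
      then have "F - {u} \<in> osub F" using rule_osub[OF FF(1) B(1) B(2)] u by blast
      with FF(2) show False by simp
    qed
  qed
  then obtain f where f: "\<And>u. u \<in> F - B \<Longrightarrow> f u \<in> FF \<and> B \<subseteq> f u \<and> u \<notin> f u"
    using bchoice[OF nv] by blast
  let ?S = "\<lambda>u g. {G. G \<subseteq> {1..n} \<and> card G = d+1 \<and> insert u (insert g B) \<subseteq> G}"
  have incl: "{G\<in>FF. wt G = B} \<subseteq> (\<Union>u\<in>F-B. \<Union>g\<in>f u - B. ?S u g)"
  proof
    fix G assume G: "G \<in> {G\<in>FF. wt G = B}"
    then have G1: "G \<in> FF" "wt G = B" by auto
    have Gw: "B \<subseteq> G" "\<And>F'. F' \<in> FF \<Longrightarrow> G \<inter> F' \<noteq> B" using wt[OF G1(1)] G1(2) by auto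
    have "G \<inter> F \<noteq> B" using Gw(2) FF(1) by blast
    then obtain u where u: "u \<in> G" "u \<in> F" "u \<notin> B" using Gw(1) B(1) by blast
    have fu: "f u \<in> FF" "B \<subseteq> f u" "u \<notin> f u" using f u by auto
    have "G \<inter> f u \<noteq> B" using Gw(2) fu(1) by blast
    then obtain g where g: "g \<in> G" "g \<in> f u" "g \<notin> B" using Gw(1) fu(2) by blast
    have "G \<in> ?S u g" using memb[OF G1(1)] u g Gw(1) by auto
    then show "G \<in> (\<Union>u\<in>F-B. \<Union>g\<in>f u - B. ?S u g)" using u g by blast
  qed
  have cS: "card (?S u g) \<le> n^(d-s-1)" if u: "u \<in> F - B" and g: "g \<in> f u - B" for u g
  proof -
    have "u \<noteq> g" using f[OF u] g by auto
    then have c: "card (insert u (insert g B)) = s + 2" using u g fB B(2) by auto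
    have "card (?S u g) \<le> card {1..n} ^ (d + 1 - card (insert u (insert g B)))"
      using card_supsets_le[of "{1..n}" "insert u (insert g B)" "d+1"] fB
      by (simp add: conj_commute)
    also have "\<dots> = n^(d-s-1)" using c by simp
    finally show ?thesis .
  qed
  have cfu: "card (f u - B) = d+1-s" if u: "u \<in> F - B" for u
    using f[OF u] memb[of "f u"] B(2) fB card_Diff_subset[of B "f u"] by auto
  have fin2: "finite (f u - B)" if u: "u \<in> F - B" for u
    using f[OF u] memb[of "f u"] by auto
  have "card {G\<in>FF. wt G = B} \<le> card (\<Union>u\<in>F-B. \<Union>g\<in>f u - B. ?S u g)"
    by (rule card_mono[OF _ incl]) (rule finite_subset[of _ "Pow {1..n}"], auto)
  also have "\<dots> \<le> (\<Sum>u\<in>F-B. card (\<Union>g\<in>f u - B. ?S u g))"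
    by (rule card_UN_le) (use fF in auto)
  also have "\<dots> \<le> (\<Sum>u\<in>F-B. (\<Sum>g\<in>f u - B. card (?S u g)))"
    by (rule sum_mono, rule card_UN_le) (use fin2 in auto)
  also have "\<dots> \<le> (\<Sum>u\<in>F-B. (\<Sum>g\<in>f u - B. n^(d-s-1)))"
    by (rule sum_mono, rule sum_mono) (use cS in auto)
  also have "\<dots> = (\<Sum>u\<in>F-B. (d+1-s) * n^(d-s-1))"
    by (rule sum.cong) (use cfu in auto)
  also have "\<dots> = (d+1-s)*((d+1-s)*n^(d-s-1))"
    using card_Diff_subset[OF fB B(1)] fF B(2) by simp
  finally show ?thesis using B_def by simp
qed

lemma D0_bound: "card D0 \<le> (d+1-s)*(d+1-s)*n^(d-1)"
proof -
  let ?Bs = "{B. B \<subseteq> {1..n} \<and> card B = s}"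
  let ?m = "(d+1-s)*((d+1-s)*n^(d-s-1))"
  have incl: "D0 \<subseteq> (\<Union>B\<in>?Bs. {F\<in>D0. wt F = B})"
  proof
    fix F assume F: "F \<in> D0"
    then have "F \<in> FF" using D0_def by auto
    then have "wt F \<in> ?Bs" using wt memb by blast
    then show "F \<in> (\<Union>B\<in>?Bs. {F\<in>D0. wt F = B})" using F by blast
  qed
  have each: "card {F\<in>D0. wt F = B} \<le> ?m" for B
  proof (cases "{F\<in>D0. wt F = B} = {}")
    case True then show ?thesis unfolding True by simp
  next
    case False
    then obtain F where F: "F \<in> D0" "wt F = B" by blast
    have "{F\<in>D0. wt F = B} \<subseteq> {G\<in>FF. wt G = wt F}" using F D0_def by auto
    then have "card {F\<in>D0. wt F = B} \<le> card {G\<in>FF. wt G = wt F}"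
      by (rule card_mono[rotated]) (rule finite_subset[OF _ finFF], auto)
    also have "\<dots> \<le> ?m" by (rule D0_class[OF F(1)])
    finally show ?thesis .
  qed
  have finBs: "finite ?Bs" by (rule finite_subset[of _ "Pow {1..n}"]) auto
  have "card D0 \<le> card (\<Union>B\<in>?Bs. {F\<in>D0. wt F = B})"
    by (rule card_mono[OF _ incl]) (rule finite_UN_I[OF finBs], rule finite_subset[OF _ finFF], auto simp: D0_def)
  also have "\<dots> \<le> (\<Sum>B\<in>?Bs. card {F\<in>D0. wt F = B})" by (rule card_UN_le[OF finBs])
  also have "\<dots> \<le> (\<Sum>B\<in>?Bs. ?m)" by (rule sum_mono) (rule each)
  also have "\<dots> = (n choose s) * ?m" using n_subsets[of "{1..n}" s] by simp
  also have "\<dots> \<le> n^s * ?m" using binomial_le_pow[of s n] ds nd by (intro mult_right_mono) auto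
  also have "\<dots> = (d+1-s)*(d+1-s)*(n^s * n^(d-s-1))" by (simp add: ac_simps)
  also have "n^s * n^(d-s-1) = n^(d-1)"
  proof -
    have "s + (d-s-1) = d - 1" using ds s1 by simp
    then show ?thesis by (metis power_add)
  qed
  finally show ?thesis by simp
qed


lemma osub_csub: assumes F: "F \<in> FF" shows "card (osub F) + card (csub F) = d+1"
proof -
  have fF: "finite F" "card F = d+1" using memb[OF F] by auto
  have "osub F \<union> csub F = {H. H \<subseteq> F \<and> card H = d}" unfolding osub_def csub_def by auto
  moreover have "osub F \<inter> csub F = {}" unfolding osub_def csub_def by auto
  moreover have "finite (osub F)" "finite (csub F)" unfolding osub_def csub_def
    by (rule finite_subset[of _ "Pow F"], use fF in auto)+
  ultimately have "card (osub F) + card (csub F) = card {H. H \<subseteq> F \<and> card H = d}"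
    using card_Un_disjoint by metis
  also have "\<dots> = d+1" using n_subsets[OF fF(1), of d] fF(2) by simp
  finally show ?thesis .
qed

lemma finCl: "finite Cl" unfolding Cl_def by (rule finite_subset[of _ "Pow {1..n}"]) auto
lemma finOp: "finite Op" unfolding Op_def by (rule finite_subset[of _ "Pow {1..n}"]) auto

lemma upper_deg: assumes H: "card H = d" "H \<subseteq> {1..n}" shows "card {F\<in>FF. H \<subseteq> F} \<le> n - d"
proof -
  have fH: "finite H" using H finite_subset by blast
  have "{F\<in>FF. H \<subseteq> F} \<subseteq> (\<lambda>z. insert z H) ` ({1..n} - H)"
  proof
    fix F assume F: "F \<in> {F\<in>FF. H \<subseteq> F}"
    then have F1: "F \<in> FF" "H \<subseteq> F" by auto
    have m: "finite F" "card F = d+1" "F \<subseteq> {1..n}" using memb[OF F1(1)] by auto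
    have "card (F - H) = 1" using card_Diff_subset[OF fH F1(2)] m H by simp
    then obtain z where z: "F - H = {z}" using card_1_singletonE by blast
    then have "z \<in> F" "z \<notin> H" by auto
    then have "F = insert z H" using insert_eq_card[of F H z] m H F1 by simp
    then show "F \<in> (\<lambda>z. insert z H) ` ({1..n} - H)" using \<open>z \<in> F\<close> \<open>z \<notin> H\<close> m by blast
  qed
  then have "card {F\<in>FF. H \<subseteq> F} \<le> card ((\<lambda>z. insert z H) ` ({1..n} - H))"
    by (rule card_mono[rotated]) simp
  also have "\<dots> \<le> card ({1..n} - H)" by (rule card_image_le) simp
  also have "\<dots> = n - d" using card_Diff_subset[OF fH H(2)] H by simp
  finally show ?thesis .
qed

lemma sum_csub: "(\<Sum>F\<in>FF. card (csub F)) \<le> (n-d) * card Cl"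
proof -
  have cs: "card (csub F) = (\<Sum>H\<in>Cl. if H \<subseteq> F then 1 else 0)" if F: "F \<in> FF" for F
  proof -
    have "csub F = {H\<in>Cl. H \<subseteq> F}" using memb[OF F] unfolding csub_def Cl_def by auto
    then show ?thesis using sum.inter_filter[OF finCl, of "\<lambda>_. 1::nat" "\<lambda>H. H \<subseteq> F"] by simp
  qed
  have "(\<Sum>F\<in>FF. card (csub F)) = (\<Sum>F\<in>FF. \<Sum>H\<in>Cl. if H \<subseteq> F then 1 else 0)"
    by (rule sum.cong) (use cs in auto)
  also have "\<dots> = (\<Sum>H\<in>Cl. \<Sum>F\<in>FF. if H \<subseteq> F then 1 else 0)" by (rule sum.swap)
  also have "\<dots> = (\<Sum>H\<in>Cl. card {F\<in>FF. H \<subseteq> F})"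
    by (rule sum.cong) (use sum.inter_filter[OF finFF, of "\<lambda>_. 1::nat"] in auto)
  also have "\<dots> \<le> (\<Sum>H\<in>Cl. n - d)" by (rule sum_mono) (rule upper_deg, auto simp: Cl_def)
  finally show ?thesis by (simp add: mult.commute)
qed

lemma Op_Cl: "card Op + card Cl = n choose d"
proof -
  have "Op \<union> Cl = {H. H \<subseteq> {1..n} \<and> card H = d}" "Op \<inter> Cl = {}" unfolding Op_def Cl_def by auto
  then show ?thesis using card_Un_disjoint[OF finOp finCl] n_subsets[of "{1..n}" d] by simp
qed

lemma FF_split: "card FF = card D0 + card D1 + card D2"
  and sum_osub: "(\<Sum>F\<in>FF. card (osub F)) = card D1 + (\<Sum>F\<in>D2. card (osub F))"
proof -
  have e: "FF = D0 \<union> D1 \<union> D2"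
  proof
    show "FF \<subseteq> D0 \<union> D1 \<union> D2"
    proof
      fix F assume F: "F \<in> FF"
      show "F \<in> D0 \<union> D1 \<union> D2"
      proof (cases "card (osub F)")
        case 0 then have "osub F = {}" using fin_osub[OF F] by simp
        then show ?thesis using F D0_def by blast
      next
        case (Suc k) then show ?thesis using F D1_def D2_def by (cases k) auto
      qed
    qed
    show "D0 \<union> D1 \<union> D2 \<subseteq> FF" unfolding D0_def D1_def D2_def by auto
  qed
  have d: "D0 \<inter> D1 = {}" "(D0 \<union> D1) \<inter> D2 = {}" unfolding D0_def D1_def D2_def by auto
  have f: "finite D0" "finite D1" "finite D2" unfolding D0_def D1_def D2_def
    by (rule finite_subset[OF _ finFF], auto)+
  show "card FF = card D0 + card D1 + card D2"
    by (subst e) (simp add: card_Un_disjoint f d)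
  have "(\<Sum>F\<in>FF. card (osub F)) = (\<Sum>F\<in>D0. card (osub F)) + (\<Sum>F\<in>D1. card (osub F)) + (\<Sum>F\<in>D2. card (osub F))"
    by (subst e) (simp add: sum.union_disjoint f d)
  moreover have "(\<Sum>F\<in>D0. card (osub F)) = 0" unfolding D0_def by simp
  moreover have "(\<Sum>F\<in>D1. card (osub F)) = card D1" unfolding D1_def by simp
  ultimately show "(\<Sum>F\<in>FF. card (osub F)) = card D1 + (\<Sum>F\<in>D2. card (osub F))" by simp
qed

lemma osub_disj: "F1 \<in> FF \<Longrightarrow> F2 \<in> FF \<Longrightarrow> F1 \<noteq> F2 \<Longrightarrow> osub F1 \<inter> osub F2 = {}"
  unfolding osub_def using open_unique by blast

lemma osub_Op: "F \<in> FF \<Longrightarrow> osub F \<subseteq> Op"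
  unfolding osub_def Op_def using memb by blast

lemma D2_Bad: "(\<Sum>F\<in>D2. card (osub F)) \<le> card Bad"
proof -
  have fD2: "finite D2" unfolding D2_def by (rule finite_subset[OF _ finFF]) auto
  have D2FF: "D2 \<subseteq> FF" unfolding D2_def by auto
  have "(\<Sum>F\<in>D2. card (osub F)) = card (\<Union>(osub ` D2))"
    by (rule card_UN_disjoint[symmetric]) (use fD2 fin_osub osub_disj D2FF in blast)+
  also have "\<dots> \<le> card Bad"
  proof (rule card_mono)
    show "finite Bad" unfolding Bad_def using finOp by simp
    show "\<Union>(osub ` D2) \<subseteq> Bad"
    proof
      fix H assume "H \<in> \<Union>(osub ` D2)"
      then obtain F where F: "F \<in> D2" "H \<in> osub F" by blast
      have "H \<in> Op" using osub_Op F D2FF by blast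
      moreover have "H \<notin> Good"
      proof
        assume "H \<in> Good"
        then obtain F' where F': "F' \<in> D1" "H \<in> osub F'" unfolding Good_def by blast
        have "F' \<in> FF" using F' D1_def by auto
        then have "F = F'" using osub_disj[of F F'] F F' D2FF by blast
        then show False using F F' unfolding D1_def D2_def by auto
      qed
      ultimately show "H \<in> Bad" unfolding Bad_def by blast
    qed
  qed
  finally show ?thesis .
qed

lemma Op_split: "card Op = card D1 + card Bad"
proof -
  have fD1: "finite D1" unfolding D1_def by (rule finite_subset[OF _ finFF]) auto
  have D1FF: "D1 \<subseteq> FF" unfolding D1_def by auto
  have "card Good = (\<Sum>F\<in>D1. card (osub F))" unfolding Good_def
    by (rule card_UN_disjoint) (use fD1 fin_osub osub_disj D1FF in blast)+
  also have "\<dots> = card D1" unfolding D1_def by simp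
  finally have cG: "card Good = card D1" .
  have "Good \<subseteq> Op" unfolding Good_def using osub_Op D1FF by blast
  then have "card Op = card Good + card Bad" unfolding Bad_def
    using card_Diff_subset[of Good Op] finOp card_mono[of Op Good] finite_subset by fastforce
  then show ?thesis using cG by simp
qed

lemma Bad_bound:
  "real (n-d-1) * card Bad \<le> 2 * n * (real (n-1 choose d) - card FF) + 2 * real (n-d-1) * card D0"
proof -
  define a where "a = real (n - d)"
  have a1: "real (n-d-1) = a - 1" using nd unfolding a_def by simp
  have na: "real n = a + d" using nd unfolding a_def by simp
  define T2 where "T2 = real (\<Sum>F\<in>D2. card (osub F))"
  have e1: "real (d+1) * card FF = card D1 + T2 + real (\<Sum>F\<in>FF. card (csub F))"
  proof -
    have "(\<Sum>F\<in>FF. card (osub F) + card (csub F)) = (\<Sum>F\<in>FF. d+1)"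
      by (rule sum.cong) (use osub_csub in auto)
    then have N: "(d+1) * card FF = card D1 + (\<Sum>F\<in>D2. card (osub F)) + (\<Sum>F\<in>FF. card (csub F))"
      using sum_osub by (simp add: sum.distrib)
    have "real ((d+1) * card FF) = real (card D1 + (\<Sum>F\<in>D2. card (osub F)) + (\<Sum>F\<in>FF. card (csub F)))"
      by (simp only: N)
    then show ?thesis unfolding T2_def by (simp only: of_nat_add of_nat_mult)
  qed
  have "real (\<Sum>F\<in>FF. card (csub F)) \<le> real ((n-d) * card Cl)"
    by (simp only: of_nat_le_iff sum_csub)
  then have e2: "real (\<Sum>F\<in>FF. card (csub F)) \<le> a * card Cl"
    unfolding a_def by (simp only: of_nat_mult)
  have "real (card Op + card Cl) = real (n choose d)" by (simp only: Op_Cl)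
  moreover have "real (card Op) = real (card D1 + card Bad)" by (simp only: Op_split)
  ultimately have e3: "real (card Cl) = real (n choose d) - card D1 - card Bad" by simp
  have e4: "T2 \<le> card Bad" unfolding T2_def of_nat_le_iff by (rule D2_Bad)
  have e5: "2 * real (card D2) \<le> T2"
  proof -
    have "(\<Sum>F\<in>D2. 2) \<le> (\<Sum>F\<in>D2. card (osub F))" by (rule sum_mono) (auto simp: D2_def)
    then have "2 * card D2 \<le> (\<Sum>F\<in>D2. card (osub F))" by (simp add: mult.commute)
    then have "real (2 * card D2) \<le> T2" unfolding T2_def by (simp only: of_nat_le_iff)
    then show ?thesis by simp
  qed
  have "real (card FF) = real (card D0 + card D1 + card D2)" by (simp only: FF_split)
  then have e6: "real (card FF) = card D0 + card D1 + card D2" by simp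
  have "real ((n - d) * (n choose d)) = real (n * ((n - 1) choose d))"
    by (simp only: binomial_absorb_comp)
  then have e7: "a * real (n choose d) = n * real (n-1 choose d)"
    unfolding a_def by (simp only: of_nat_mult)
  have a3: "a \<ge> 1" using nd unfolding a_def by simp
  have m1: "a * card Cl = a * real (n choose d) - a * card D1 - a * card Bad"
    using e3 by (simp add: right_diff_distrib)
  have m2: "(a - 1) * (2 * real (card D2)) \<le> (a - 1) * card Bad"
    using e4 e5 a3 by (intro mult_left_mono) auto
  have m3: "real n * card FF = a * card FF + d * card FF" using na by (simp add: distrib_right)
  have m4: "a * card FF = a * card D0 + a * card D1 + a * card D2" using e6 by (simp add: distrib_left)
  have m5: "real (d+1) * card FF = d * card FF + card FF" by (simp add: distrib_right)
  have m6: "(a - 1) * card Bad = a * card Bad - card Bad" "(a-1) * (2 * real (card D2)) = 2 * (a * card D2) - 2 * card D2"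
    "2 * (a - 1) * card D0 = 2 * (a * card D0) - 2 * card D0"
    by (simp_all add: left_diff_distrib)
  have m7: "2 * real n * (real (n-1 choose d) - card FF) = 2 * (real n * real (n-1 choose d)) - 2 * (real n * card FF)"
    by (simp add: right_diff_distrib)
  have "(a - 1) * card Bad \<le> 2 * n * (real (n-1 choose d) - card FF) + 2 * (a - 1) * card D0"
    using e1 e2 m1 e4 m2 m3 m4 e7 e6 m5 m6 m7 by linarith
  then show ?thesis using a1 by simp
qed


lemma D1_cover: "card {F\<in>D1. X \<inter> F = {}} \<le> (\<Sum>y\<in>{1..n}-X. card (Src y) * n^(d-s))"
proof -
  let ?S = "\<lambda>y B. {F. F \<subseteq> {1..n} \<and> card F = d+1 \<and> insert y B \<subseteq> F}"
  have incl: "{F\<in>D1. X \<inter> F = {}} \<subseteq> (\<Union>y\<in>{1..n}-X. \<Union>B\<in>Src y. ?S y B)"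
  proof
    fix F assume F: "F \<in> {F\<in>D1. X \<inter> F = {}}"
    then obtain x B where xB: "x \<in> F" "B \<in> Src x" "B \<subseteq> F" using D1_src by blast
    have m: "F \<subseteq> {1..n}" "card F = d+1" using F memb unfolding D1_def by auto
    have "x \<in> {1..n} - X" using xB m F by auto
    then show "F \<in> (\<Union>y\<in>{1..n}-X. \<Union>B\<in>Src y. ?S y B)" using xB m by blast
  qed
  have cS: "card (?S y B) \<le> n^(d-s)" if B: "B \<in> Src y" for y B
  proof -
    have B1: "B \<subseteq> {1..n}" "card B = s" "y \<notin> B" using Src_sub[OF B] B Src_def by auto
    have fB: "finite B" using B1 finite_subset by blast
    have c: "card (insert y B) = s + 1" using B1 fB by simp
    have "card (?S y B) \<le> card {1..n} ^ (d + 1 - card (insert y B))"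
      using card_supsets_le[of "{1..n}" "insert y B" "d+1"] fB by (simp add: conj_commute)
    also have "\<dots> = n^(d-s)" using c by simp
    finally show ?thesis .
  qed
  have "card {F\<in>D1. X \<inter> F = {}} \<le> card (\<Union>y\<in>{1..n}-X. \<Union>B\<in>Src y. ?S y B)"
    by (rule card_mono[OF _ incl]) (rule finite_subset[of _ "Pow {1..n}"], auto)
  also have "\<dots> \<le> (\<Sum>y\<in>{1..n}-X. card (\<Union>B\<in>Src y. ?S y B))" by (rule card_UN_le) simp
  also have "\<dots> \<le> (\<Sum>y\<in>{1..n}-X. \<Sum>B\<in>Src y. card (?S y B))"
    by (rule sum_mono, rule card_UN_le, rule fin_Src)
  also have "\<dots> \<le> (\<Sum>y\<in>{1..n}-X. \<Sum>B\<in>Src y. n^(d-s))"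
    by (rule sum_mono, rule sum_mono) (rule cS)
  also have "\<dots> = (\<Sum>y\<in>{1..n}-X. card (Src y) * n^(d-s))" by simp
  finally show ?thesis .
qed

definition "Oth x = (\<Union>y\<in>{1..n}-{x}. Src y)"
definition "AllP = (SIGMA x:{1..n}. SIGMA B:Src x. Oth x)"
definition "PP = {p\<in>AllP. snd (snd p) \<inter> insert (fst p) (fst (snd p)) = {}}"
definition "Wset p = {W. snd (snd p) \<subseteq> W \<and> W \<subseteq> {1..n} - insert (fst p) (fst (snd p)) \<and> card W = d - s}"

lemma card_Oth: "card (Oth x) = (\<Sum>y\<in>{1..n}-{x}. card (Src y))"
  unfolding Oth_def by (rule card_UN_disjoint) (use fin_Src Src_disj in auto)

lemma finOth: "finite (Oth x)" unfolding Oth_def using fin_Src by auto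

lemma card_AllP: "card AllP = (\<Sum>x\<in>{1..n}. card (Src x) * card (Oth x))"
  unfolding AllP_def using fin_Src finOth by (simp add: card_SigmaI)

lemma finAllP: "finite AllP"
  unfolding AllP_def using fin_Src finOth by (intro finite_SigmaI) auto

lemma NP_bound: "card (AllP - PP) \<le> (\<Sum>x\<in>{1..n}. card (Src x) * ((s+1) * n^(s-1)))"
proof -
  let ?M = "\<lambda>x B. {B'. B' \<subseteq> {1..n} \<and> card B' = s \<and> B' \<inter> insert x B \<noteq> {}}"
  have incl: "AllP - PP \<subseteq> (SIGMA x:{1..n}. SIGMA B:Src x. ?M x B)"
  proof
    fix p assume p: "p \<in> AllP - PP"
    then obtain x B B' where pe: "p = (x,(B,B'))" "x \<in> {1..n}" "B \<in> Src x" "B' \<in> Oth x"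
      unfolding AllP_def by auto
    then obtain y where "B' \<in> Src y" unfolding Oth_def by auto
    then have "B' \<subseteq> {1..n} \<and> card B' = s" by (rule Src_sub)
    moreover have "B' \<inter> insert x B \<noteq> {}" using p pe unfolding PP_def by auto
    ultimately show "p \<in> (SIGMA x:{1..n}. SIGMA B:Src x. ?M x B)" using pe by auto
  qed
  have cM: "card (?M x B) \<le> (s+1) * n^(s-1)" if B: "B \<in> Src x" for x B
  proof -
    have B1: "card B = s" "finite B" using Src_sub[OF B] finite_subset[of B "{1..n}"] by auto
    have "?M x B \<subseteq> (\<Union>z\<in>insert x B. {B'. B' \<subseteq> {1..n} \<and> card B' = s \<and> {z} \<subseteq> B'})" by blast
    then have "card (?M x B) \<le> card (\<Union>z\<in>insert x B. {B'. B' \<subseteq> {1..n} \<and> card B' = s \<and> {z} \<subseteq> B'})"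
      by (rule card_mono[rotated]) (rule finite_UN_I, use B1 in simp, rule finite_subset[of _ "Pow {1..n}"], auto)
    also have "\<dots> \<le> (\<Sum>z\<in>insert x B. card {B'. B' \<subseteq> {1..n} \<and> card B' = s \<and> {z} \<subseteq> B'})"
      by (rule card_UN_le) (use B1 in simp)
    also have "\<dots> \<le> (\<Sum>z\<in>insert x B. n^(s-1))"
      by (rule sum_mono) (use card_supsets_le[of "{1..n}" "{_}" s] in simp)
    also have "\<dots> \<le> (s+1) * n^(s-1)"
    proof -
      have "card (insert x B) \<le> s + 1" using B1 by (simp add: card_insert_if)
      then have "card (insert x B) * n^(s-1) \<le> (s+1) * n^(s-1)" by (rule mult_right_mono) simp
      then show ?thesis by simp
    qed
    finally show ?thesis .
  qed
  have fin: "finite (SIGMA x:{1..n}. SIGMA B:Src x. ?M x B)"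
    by (intro finite_SigmaI) (auto intro: fin_Src finite_subset[of _ "Pow {1..n}"])
  have "card (AllP - PP) \<le> card (SIGMA x:{1..n}. SIGMA B:Src x. ?M x B)"
    by (rule card_mono[OF fin incl])
  also have "\<dots> = (\<Sum>x\<in>{1..n}. \<Sum>B\<in>Src x. card (?M x B))"
    using fin_Src by (simp add: card_SigmaI finite_subset[of _ "Pow {1..n}"])
  also have "\<dots> \<le> (\<Sum>x\<in>{1..n}. \<Sum>B\<in>Src x. (s+1) * n^(s-1))"
    by (rule sum_mono, rule sum_mono) (rule cM)
  also have "\<dots> = (\<Sum>x\<in>{1..n}. card (Src x) * ((s+1) * n^(s-1)))" by simp
  finally show ?thesis .
qed


lemma PP_elem:
  assumes "p \<in> PP"
  obtains x B B' y where "p = (x,(B,B'))" "x \<in> {1..n}" "B \<in> Src x" "y \<in> {1..n}" "y \<noteq> x"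
     "B' \<in> Src y" "B' \<inter> insert x B = {}"
proof -
  obtain x B B' where e: "p = (x,(B,B'))" "x \<in> {1..n}" "B \<in> Src x" "B' \<in> Oth x" "B' \<inter> insert x B = {}"
    using assms unfolding PP_def AllP_def by auto
  then obtain y where "y \<in> {1..n} - {x}" "B' \<in> Src y" using e(4) unfolding Oth_def by blast
  then show ?thesis using that e by blast
qed

lemma Bad_fin: "G \<in> Bad \<Longrightarrow> finite G"
  unfolding Bad_def Op_def using finite_subset[of G "{1..n}"] by auto

lemma PP_bound: "card PP * ((n-2*s-1) choose (d-2*s)) \<le> 4^d * card Bad"
proof -
  define Q where "Q = (SIGMA p:PP. Wset p)"
  have finPP: "finite PP" unfolding PP_def using finAllP by simp
  have finW: "finite (Wset p)" for p unfolding Wset_def by (rule finite_subset[of _ "Pow {1..n}"]) auto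
  have cW: "(n-2*s-1) choose (d-2*s) \<le> card (Wset p)" if p: "p \<in> PP" for p
  proof -
    obtain x B B' y where e: "p = (x,(B,B'))" "x \<in> {1..n}" "B \<in> Src x" "y \<in> {1..n}" "y \<noteq> x"
      "B' \<in> Src y" "B' \<inter> insert x B = {}" using PP_elem[OF p] by blast
    have B: "B \<subseteq> {1..n}" "card B = s" "x \<notin> B" using Src_sub[OF e(3)] e(3) Src_def by auto
    have B': "B' \<subseteq> {1..n}" "card B' = s" using Src_sub[OF e(6)] by auto
    have fB: "finite B" using B finite_subset by blast
    have cA: "card ({1..n} - insert x B) = n - (s+1)"
      using card_Diff_subset[of "insert x B" "{1..n}"] B e(2) fB by simp
    have sub: "B' \<subseteq> {1..n} - insert x B" using B' e(7) by blast
    have "(card ({1..n} - insert x B) - card B') choose (d - s - card B') \<le>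
          card {W. B' \<subseteq> W \<and> W \<subseteq> {1..n} - insert x B \<and> card W = d - s}"
      by (rule card_supsets_ge) (use sub B' ds in auto)
    moreover have "card ({1..n} - insert x B) - card B' = n-2*s-1" "d - s - card B' = d - 2*s"
      using cA B' by auto
    ultimately show ?thesis unfolding Wset_def e(1) by simp
  qed
  have "card PP * ((n-2*s-1) choose (d-2*s)) = (\<Sum>p\<in>PP. (n-2*s-1) choose (d-2*s))" by simp
  also have "\<dots> \<le> (\<Sum>p\<in>PP. card (Wset p))" by (rule sum_mono) (rule cW)
  also have "\<dots> = card Q" unfolding Q_def using finPP finW by simp
  finally have c1: "card PP * ((n-2*s-1) choose (d-2*s)) \<le> card Q" .
  define f where "f = (\<lambda>(p::nat \<times> nat set \<times> nat set, W::nat set). (fst (snd p) \<union> W, (fst (snd p), snd (snd p))))"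
  define T where "T = (SIGMA G:Bad. Pow G \<times> Pow G)"
  have mapsto: "f q \<in> T" if q: "q \<in> Q" for q
  proof -
    obtain p W where pW: "q = (p, W)" "p \<in> PP" "W \<in> Wset p" using q unfolding Q_def by auto
    obtain x B B' y where e: "p = (x,(B,B'))" "x \<in> {1..n}" "B \<in> Src x" "y \<in> {1..n}" "y \<noteq> x"
      "B' \<in> Src y" "B' \<inter> insert x B = {}" using PP_elem[OF pW(2)] by blast
    have W: "B' \<subseteq> W" "W \<subseteq> {1..n} - insert x B" "card W = d - s" using pW(3) unfolding Wset_def e(1) by auto
    have B: "B \<subseteq> {1..n}" "card B = s" "x \<notin> B" "valid B x" using Src_sub[OF e(3)] e(3) Src_def by auto
    have B': "card B' = s" "y \<notin> B'" "valid B' y" using Src_sub[OF e(6)] e(6) Src_def by auto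
    have fB: "finite B" "finite W" using B W finite_subset by blast+
    have cH: "card (B \<union> W) = d" using card_Un_disjoint[of B W] fB W B ds by auto
    have opH: "opn (B \<union> W)" unfolding opn_def using B W by blast
    have HOp: "B \<union> W \<in> Op" unfolding Op_def using cH opH B W by auto
    have HG: "B \<union> W \<notin> Good"
    proof
      assume "B \<union> W \<in> Good"
      then obtain F where F: "F \<in> D1" "B \<union> W \<in> osub F" unfolding Good_def by blast
      then have "B \<union> W \<subseteq> F" unfolding osub_def by auto
      then have "x = y" using D1_unique[OF F(1), of B x B' y] B B' W by blast
      with e(5) show False by simp
    qed
    show ?thesis unfolding T_def f_def pW(1) e(1) Bad_def using HOp HG W by auto
  qed
  have inj: "inj_on f Q"
  proof (rule inj_onI)
    fix q1 q2 assume q1: "q1 \<in> Q" and q2: "q2 \<in> Q" and eq: "f q1 = f q2"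
    obtain p1 W1 where pW1: "q1 = (p1, W1)" "p1 \<in> PP" "W1 \<in> Wset p1" using q1 unfolding Q_def by auto
    obtain p2 W2 where pW2: "q2 = (p2, W2)" "p2 \<in> PP" "W2 \<in> Wset p2" using q2 unfolding Q_def by auto
    obtain x1 B1 B1' y1 where e1: "p1 = (x1,(B1,B1'))" "B1 \<in> Src x1"
      using PP_elem[OF pW1(2)] by metis
    obtain x2 B2 B2' y2 where e2: "p2 = (x2,(B2,B2'))" "B2 \<in> Src x2"
      using PP_elem[OF pW2(2)] by metis
    have eqs: "B1 \<union> W1 = B2 \<union> W2" "B1 = B2" "B1' = B2'" using eq unfolding f_def pW1(1) pW2(1) e1(1) e2(1) by auto
    have "x1 = x2" using Src_disj[of x1 x2] e1(2) e2(2) eqs(2) by blast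
    moreover have "W1 \<inter> B1 = {}" "W2 \<inter> B2 = {}" using pW1(3) pW2(3) unfolding Wset_def e1(1) e2(1) by auto
    then have "W1 = W2" using eqs by blast
    ultimately show "q1 = q2" using pW1(1) pW2(1) e1(1) e2(1) eqs by simp
  qed
  have finT: "finite T" unfolding T_def
  proof (rule finite_SigmaI)
    show "finite Bad" unfolding Bad_def using finOp by simp
    show "finite (Pow G \<times> Pow G)" if "G \<in> Bad" for G using Bad_fin[OF that] by simp
  qed
  have "card Q = card (f ` Q)" using card_image[OF inj] by simp
  also have "\<dots> \<le> card T" by (rule card_mono[OF finT]) (use mapsto in blast)
  also have "card T = (\<Sum>G\<in>Bad. card (Pow G \<times> Pow G))" unfolding T_def
  proof (rule card_SigmaI)
    show "finite Bad" unfolding Bad_def using finOp by simp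
    show "\<forall>G\<in>Bad. finite (Pow G \<times> Pow G)" using Bad_fin by simp
  qed
  also have "\<dots> = (\<Sum>G\<in>Bad. 4^d)"
  proof (rule sum.cong)
    fix G assume G: "G \<in> Bad"
    then have "card G = d" "finite G" unfolding Bad_def Op_def using finite_subset by auto
    then show "card (Pow G \<times> Pow G) = 4^d"
      by (simp add: card_cartesian_product card_Pow power_mult_distrib[symmetric])
  qed simp
  also have "\<dots> = 4^d * card Bad" by simp
  finally show ?thesis using c1 by simp
qed


lemma FF_eq: "FF = D0 \<union> D1 \<union> D2"
proof
  show "FF \<subseteq> D0 \<union> D1 \<union> D2"
  proof
    fix F assume F: "F \<in> FF"
    show "F \<in> D0 \<union> D1 \<union> D2"
    proof (cases "card (osub F)")
      case 0 then have "osub F = {}" using fin_osub[OF F] by simp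
      then show ?thesis using F D0_def by blast
    next
      case (Suc k) then show ?thesis using F D1_def D2_def by (cases k) auto
    qed
  qed
  show "D0 \<union> D1 \<union> D2 \<subseteq> FF" unfolding D0_def D1_def D2_def by auto
qed

lemma D2_twice: "2 * card D2 \<le> card Bad"
proof -
  have "(\<Sum>F\<in>D2. 2) \<le> (\<Sum>F\<in>D2. card (osub F))" by (rule sum_mono) (auto simp: D2_def)
  then have "2 * card D2 \<le> (\<Sum>F\<in>D2. card (osub F))" by (simp add: mult.commute)
  then show ?thesis using D2_Bad by linarith
qed

lemma card_star:
  assumes x0: "x0 \<in> {1..n}"
  shows "card {F. F \<subseteq> {1..n} \<and> card F = d+1 \<and> x0 \<in> F} \<le> (n-1) choose d"
proof -
  let ?S = "{F. F \<subseteq> {1..n} \<and> card F = d+1 \<and> x0 \<in> F}"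
  have inj: "inj_on (\<lambda>F. F - {x0}) ?S" by (rule inj_onI) (simp, metis insert_Diff)
  have sub: "(\<lambda>F. F - {x0}) ` ?S \<subseteq> {G. G \<subseteq> {1..n} - {x0} \<and> card G = d}"
  proof
    fix G assume "G \<in> (\<lambda>F. F - {x0}) ` ?S"
    then obtain F where F: "F \<subseteq> {1..n}" "card F = d+1" "x0 \<in> F" "G = F - {x0}" by blast
    have "finite F" using F finite_subset by blast
    then show "G \<in> {G. G \<subseteq> {1..n} - {x0} \<and> card G = d}" using F by auto
  qed
  have "card ?S = card ((\<lambda>F. F - {x0}) ` ?S)" using card_image[OF inj] by simp
  also have "\<dots> \<le> card {G. G \<subseteq> {1..n} - {x0} \<and> card G = d}"
    by (rule card_mono[OF _ sub]) (rule finite_subset[of _ "Pow {1..n}"], auto)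
  also have "\<dots> = (n-1) choose d" using n_subsets[of "{1..n} - {x0}" d] x0 by simp
  finally show ?thesis .
qed

lemma main:
  fixes K :: real
  assumes K: "K \<ge> 0" and big: "real (card FF) \<ge> real ((n-1) choose d) - K * real n^(d-1)"
  shows "\<exists>x0\<in>{1..n}. real (card ((FF - {F. F \<subseteq> {1..n} \<and> card F = d+1 \<and> x0 \<in> F}) \<union>
      ({F. F \<subseteq> {1..n} \<and> card F = d+1 \<and> x0 \<in> F} - FF))) \<le> Cst d * (K+1) * real n^(d-1)"
proof -
  let ?V = "{1..n::nat}"
  have Vne: "?V \<noteq> {}" using nd by auto
  let ?f = "\<lambda>x. card (Src x)"
  have "Max (?f ` ?V) \<in> ?f ` ?V" using Vne by (intro Max_in) auto
  then obtain x0 where x0: "x0 \<in> ?V" "?f x0 = Max (?f ` ?V)" by auto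
  have x0max: "?f x \<le> ?f x0" if "x \<in> ?V" for x using x0(2) that by simp
  define star where "star = {F. F \<subseteq> {1..n} \<and> card F = d+1 \<and> x0 \<in> F}"
  define Sg where "Sg = (\<Sum>x\<in>?V. card (Src x))"
  define So where "So = (\<Sum>y\<in>?V-{x0}. card (Src y))"
  define C1 where "C1 = (n-1) choose d"
  define Cb where "Cb = (n-2*s-1) choose (d-2*s)"
  have sub5: "FF - star \<subseteq> D0 \<union> D2 \<union> {F\<in>D1. {x0} \<inter> F = {}}"
  proof
    fix F assume F: "F \<in> FF - star"
    then have "x0 \<notin> F" using memb[of F] unfolding star_def by auto
    then show "F \<in> D0 \<union> D2 \<union> {F\<in>D1. {x0} \<inter> F = {}}" using F FF_eq by auto
  qed
  have finD: "finite D0" "finite D1" "finite D2" unfolding D0_def D1_def D2_def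
    by (rule finite_subset[OF _ finFF], auto)+
  have f5: "card (FF - star) \<le> card D0 + card D2 + So * n^(d-s)"
  proof -
    have "card (FF - star) \<le> card (D0 \<union> D2 \<union> {F\<in>D1. {x0} \<inter> F = {}})"
      by (rule card_mono[OF _ sub5]) (use finD in auto)
    also have "\<dots> \<le> card D0 + card D2 + card {F\<in>D1. {x0} \<inter> F = {}}"
      using card_Un_le[of "D0 \<union> D2" "{F\<in>D1. {x0} \<inter> F = {}}"] card_Un_le[of D0 D2] by linarith
    also have "card {F\<in>D1. {x0} \<inter> F = {}} \<le> So * n^(d-s)"
      using D1_cover[of "{x0}"] unfolding So_def by (simp add: sum_distrib_right)
    finally show ?thesis by simp
  qed
  have finstar: "finite star" unfolding star_def by (rule finite_subset[of _ "Pow {1..n}"]) auto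
  have cs: "card star \<le> C1" unfolding star_def C1_def using card_star[OF x0(1)] .
  have p1: "card (star - FF) + card (FF \<inter> star) = card star"
    using card_Int_Diff[OF finstar, of FF] by (simp add: Int_commute)
  have p2: "card (FF - star) + card (FF \<inter> star) = card FF"
    using card_Int_Diff[OF finFF, of star] by simp
  have p3: "card ((FF - star) \<union> (star - FF)) \<le> card (FF - star) + card (star - FF)" by (rule card_Un_le)
  have f6: "real (card ((FF - star) \<union> (star - FF))) \<le> 2 * real (card (FF - star)) + (real C1 - real (card FF))"
  proof -
    have "card ((FF - star) \<union> (star - FF)) + card FF \<le> 2 * card (FF - star) + C1"
      using p1 p2 p3 cs by linarith
    then have "real (card ((FF - star) \<union> (star - FF)) + card FF) \<le> real (2 * card (FF - star) + C1)"
      by (simp only: of_nat_le_iff)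
    then show ?thesis by simp
  qed
  have f6b: "card (FF - star) \<le> card FF" by (rule card_mono[OF finFF]) auto
  have f7: "card D1 \<le> Sg * n^(d-s)"
    using D1_cover[of "{}"] unfolding Sg_def by (simp add: sum_distrib_right)
  have oth: "So \<le> card (Oth x)" if x: "x \<in> ?V" for x
  proof -
    have "Sg = card (Src x) + (\<Sum>y\<in>?V-{x}. card (Src y))" unfolding Sg_def
      using sum.remove[of ?V x "\<lambda>y. card (Src y)"] x by simp
    moreover have "Sg = card (Src x0) + So" unfolding Sg_def So_def
      using sum.remove[of ?V x0 "\<lambda>y. card (Src y)"] x0(1) by simp
    ultimately show ?thesis using card_Oth[of x] x0max[OF x] by linarith
  qed
  have "Sg * So = (\<Sum>x\<in>?V. card (Src x) * So)" unfolding Sg_def by (simp add: sum_distrib_right)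
  also have "\<dots> \<le> (\<Sum>x\<in>?V. card (Src x) * card (Oth x))" by (rule sum_mono) (use oth in simp)
  also have "\<dots> = card AllP" by (rule card_AllP[symmetric])
  also have "\<dots> \<le> card PP + card (AllP - PP)"
  proof -
    have "AllP \<subseteq> PP \<union> (AllP - PP)" by blast
    then have "card AllP \<le> card (PP \<union> (AllP - PP))" by (rule card_mono[rotated]) (use finAllP in \<open>auto simp: PP_def\<close>)
    then show ?thesis using card_Un_le[of PP "AllP - PP"] by linarith
  qed
  finally have f8a: "Sg * So \<le> card PP + card (AllP - PP)" .
  have f8b: "card (AllP - PP) \<le> Sg * ((s+1) * n^(s-1))"
    using NP_bound unfolding Sg_def by (simp add: sum_distrib_right)
  have f8c: "card PP * Cb \<le> 4^d * card Bad" unfolding Cb_def by (rule PP_bound)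
  have f1: "card D0 \<le> d^2 * n^(d-1)"
  proof -
    have "(d+1-s)*(d+1-s) \<le> d*d" using s1 by (intro mult_le_mono) auto
    then have "(d+1-s)*(d+1-s)*n^(d-1) \<le> d^2 * n^(d-1)" by (simp add: power2_eq_square)
    then show ?thesis using D0_bound by linarith
  qed
  have dpos: "d \<ge> 1" using s1 ds by simp
  have b1: "real C1 \<le> real n^d"
  proof -
    have "C1 \<le> (n-1)^d" unfolding C1_def by (rule binomial_le_pow) (use nd in simp)
    also have "\<dots> \<le> n^d" by (rule power_mono) auto
    finally have "real C1 \<le> real (n^d)" by (simp only: of_nat_le_iff)
    then show ?thesis by simp
  qed
  have b2: "real n^d \<le> (2*real d)^d * real C1"
  proof -
    have "n*d \<le> (2*(n-1))*d" using nd by (intro mult_le_mono1) simp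
    then have "n*d \<le> 2*d*(n-1)" by (simp add: ac_simps)
    then show ?thesis unfolding C1_def by (intro bin_lo) (use nd dpos in auto)
  qed
  have b3: "real n^(d-2*s) \<le> (2*real d)^(d-2*s) * real Cb"
    unfolding Cb_def by (rule bin_lo) (use nd dpos nat_ineq1[OF ds nd] in \<open>auto simp: algebra_simps\<close>)
  have t2a: "1 \<le> (2*real d)^(d-2*s)" using dpos by (intro one_le_power) simp
  have t2b: "(2*real d)^(d-2*s) \<le> (2*real d)^d" using dpos by (intro power_increasing) auto
  have pw1: "real n^d = real n * real n^(d-1)"
  proof -
    have "real n^d = real n^(Suc (d-1))" using dpos by simp
    also have "\<dots> = real n * real n^(d-1)" by (rule power_Suc)
    finally show ?thesis .
  qed
  have pw2: "real n^(d-s) * real n^s = real n^d"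
  proof -
    have "(d-s) + s = d" using ds by simp
    then show ?thesis by (metis power_add)
  qed
  have pw3: "real n^(s-1) * real n^(d-s) = real n^(d-1)"
  proof -
    have "(s-1) + (d-s) = d-1" using s1 ds by simp
    then show ?thesis by (metis power_add)
  qed
  have pw4: "real n^(d-2*s) * real n^s = real n^(d-s)"
  proof -
    have "(d-2*s) + s = d-s" using ds by simp
    then show ?thesis by (metis power_add)
  qed
  have npos: "real n > 0" using nd by simp
  have f2: "(real n - real d - 1) * card Bad \<le> 2 * real n * (real C1 - card FF) + 2 * (real n - real d - 1) * card D0"
  proof -
    have "real (n-d-1) = real n - real d - 1" using nd by simp
    then show ?thesis using Bad_bound unfolding C1_def by simp
  qed
  have Dl_eq: "real (card ((FF - star) \<union> (star - FF))) \<le> Cst d * (K+1) * real n^(d-1)"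
    unfolding Cst_def
  proof (rule arith_final[where N="real n" and Fc="real (card FF)" and Ca="real C1" and Dz="real (card D0)"
      and Do="real (card D1)" and Dt="real (card D2)" and Bad="real (card Bad)" and Sg="real Sg" and So="real So"
      and P="real (card PP)" and NP="real (card (AllP - PP))" and Cb="real Cb" and Xo="real (card (FF - star))"
      and pd="real n^d" and pa="real n^(d-s)" and ps="real n^s" and psm="real n^(s-1)" and pb="real n^(d-2*s)"
      and tt="(2*real d)^(d-2*s)" and Sv="real (s+1)"])
    show "2 * (real d + 1) \<le> real n" using nd by simp
    show "1 \<le> real d" using dpos by simp
    show "0 \<le> K" by (rule K)
    show "0 < real n ^ (d - 1)" using npos by simp
    show "real n ^ d = real n * real n ^ (d - 1)" by (rule pw1)
    show "real n ^ (d - s) * real n ^ s = real n ^ d" by (rule pw2)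
    show "real n ^ (s - 1) * real n ^ (d - s) = real n ^ (d - 1)" by (rule pw3)
    show "real n ^ (d - 2 * s) * real n ^ s = real n ^ (d - s)" by (rule pw4)
    show "0 < real n ^ (d - s)" "0 < real n ^ s" "0 \<le> real n ^ (d - 2*s)" "0 \<le> real n ^ (s - 1)"
      using npos by simp_all
    show "0 \<le> real (card FF)" "0 \<le> real C1" "0 \<le> real (card D0)" "0 \<le> real (card D1)" "0 \<le> real (card D2)"
      "0 \<le> real (card Bad)" "0 \<le> real Sg" "0 \<le> real So" "0 \<le> real (card PP)" "0 \<le> real (card (AllP - PP))"
      "0 \<le> real Cb" "0 \<le> real (card (FF - star))" by simp_all
    show "real (card D0) \<le> (real d)\<^sup>2 * real n ^ (d - 1)"
    proof -
      have "real (card D0) \<le> real (d^2 * n^(d-1))" using f1 by (simp only: of_nat_le_iff)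
      then show ?thesis by simp
    qed
    show "0 \<le> (real d)\<^sup>2" by simp
    show "(real n - real d - 1) * real (card Bad) \<le> 2 * real n * (real C1 - real (card FF)) + 2 * (real n - real d - 1) * real (card D0)"
      by (rule f2)
    show "real C1 - real (card FF) \<le> K * real n ^ (d - 1)" using big unfolding C1_def by simp
    show "real (card FF) = real (card D0) + real (card D1) + real (card D2)" using FF_split by simp
    show "2 * real (card D2) \<le> real (card Bad)"
    proof -
      have "real (2 * card D2) \<le> real (card Bad)" using D2_twice by (simp only: of_nat_le_iff)
      then show ?thesis by simp
    qed
    show "real (card (FF - star)) \<le> real (card D0) + real (card D2) + real So * real n ^ (d - s)"
    proof -
      have "real (card (FF - star)) \<le> real (card D0 + card D2 + So * n^(d-s))" using f5 by (simp only: of_nat_le_iff)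
      then show ?thesis by simp
    qed
    show "real (card (FF - star \<union> (star - FF))) \<le> 2 * real (card (FF - star)) + (real C1 - real (card FF))"
      by (rule f6)
    show "real (card (FF - star)) \<le> real (card FF)" using f6b by simp
    show "real (card D1) \<le> real Sg * real n ^ (d - s)"
    proof -
      have "real (card D1) \<le> real (Sg * n^(d-s))" using f7 by (simp only: of_nat_le_iff)
      then show ?thesis by simp
    qed
    show "real Sg * real So \<le> real (card PP) + real (card (AllP - PP))"
    proof -
      have "real (Sg * So) \<le> real (card PP + card (AllP - PP))" using f8a by (simp only: of_nat_le_iff)
      then show ?thesis by simp
    qed
    show "real (card (AllP - PP)) \<le> real Sg * (real (s + 1) * real n ^ (s - 1))"
    proof -
      have "real (card (AllP - PP)) \<le> real (Sg * ((s+1) * n^(s-1)))" using f8b by (simp only: of_nat_le_iff)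
      then show ?thesis by (simp add: algebra_simps)
    qed
    show "real (card PP) * real Cb \<le> 4 ^ d * real (card Bad)"
    proof -
      have "real (card PP * Cb) \<le> real (4^d * card Bad)" using f8c by (simp only: of_nat_le_iff)
      then show ?thesis by simp
    qed
    show "real C1 \<le> real n ^ d" by (rule b1)
    show "real n ^ d \<le> (2 * real d) ^ d * real C1" by (rule b2)
    show "real n ^ (d - 2 * s) \<le> (2 * real d) ^ (d - 2 * s) * real Cb" by (rule b3)
    show "1 \<le> (2 * real d) ^ (d - 2 * s)" by (rule t2a)
    show "(2 * real d) ^ (d - 2 * s) \<le> (2 * real d) ^ d" by (rule t2b)
    show "real (s + 1) \<le> real d" using ds s1 by simp
    show "1 \<le> (4::real) ^ d" by simp
    show "0 \<le> real (s + 1)" by simp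
  qed
  then show ?thesis using x0(1) unfolding star_def by blast
qed

end

theorem proposition2p7:
  fixes d :: nat
  shows "\<exists>C::real. \<forall>s n (K::real) (\<F>::nat set set).
    1 \<le> s \<longrightarrow> d \<ge> 2 * s \<longrightarrow> n \<ge> 2 * (d + 1) \<longrightarrow> K \<ge> 0 \<longrightarrow>
    \<F> \<subseteq> {F. F \<subseteq> {1..n} \<and> card F = d + 1} \<longrightarrow>
    s_witness_family s \<F> \<longrightarrow>
    real (card \<F>) \<ge> real ((n - 1) choose d) - K * real n ^ (d - 1) \<longrightarrow>
    (\<exists>x0\<in>{1..n}. let star = {F. F \<subseteq> {1..n} \<and> card F = d + 1 \<and> x0 \<in> F} in real (card ((\<F> - star) \<union> (star - \<F>)))
        \<le> C * (K + 1) * real n ^ (d - 1))"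
proof (rule exI[of _ "Cst d"], intro allI impI)
  fix s n :: nat and K :: real and FF :: "nat set set"
  assume a: "1 \<le> s" "2 * s \<le> d" "2 * (d + 1) \<le> n" "0 \<le> K" "FF \<subseteq> {F. F \<subseteq> {1..n} \<and> card F = d + 1}"
    "s_witness_family s FF" "real ((n - 1) choose d) - K * real n ^ (d - 1) \<le> real (card FF)"
  interpret W: wf n d s FF by unfold_locales (use a in auto)
  show "\<exists>x0\<in>{1..n}. let star = {F. F \<subseteq> {1..n} \<and> card F = d + 1 \<and> x0 \<in> F} in real (card ((FF - star) \<union> (star - FF)))
        \<le> Cst d * (K + 1) * real n ^ (d - 1)"
    using W.main[OF a(4) a(7)] by (simp add: Let_def)
qed

end
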